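(* Let $\theta:[0,1]\to\mathbb R$ be smooth with $\theta>0$ on $(0,1)$, $\theta(0)=\theta(1)=0$, $\theta'(0)>0$, $\theta'(1)<0$, let $V:[0,1]\to\mathbb R$ be smooth, and let $\mathsf d(x,y)=\big|\int_x^y\frac{du}{\sqrt{\theta(u)}}\big|$ on $[0,1]$. Given $X^I\in[0,1]$ and $h>0$, set $X^0=X^I$ and define recursively $$X^{n+1}\in\operatorname*{arg\,min}_{X\in[0,1]}\Big\{\frac1{2h}\mathsf d(X,X^n)^2+V(X)\Big\},\qquad n\ge0,$$ and let $X_h:[0,\infty)\to[0,1]$ be the piecewise-constant interpolation $X_h(0)=X^0$, $X_h(t)=X^{n+1}$ for $t\in(nh,(n+1)h]$. Then for every $T>0$, $X_h$ converges uniformly on $[0,T]$ as $h\to0$ to $X(t)$, the unique solution of the replicator equation $\dot X=-\theta(X)V'(X)$ with $X(0)=X^I$.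
   Context: $\mathsf d$ is the generalised Shahshahani distance, i.e. the geodesic distance on $(0,1)$ for the Riemannian metric $|\zeta|^2_{T_x}=|\zeta|^2/\theta(x)$, extended to $[0,1]$. *)

theory Defs
  imports "HOL-Analysis.Analysis"
begin

text \<open>Smoothness on a set S: derivatives of all orders exist (within S,
  so one-sided at the endpoints of a closed interval).\<close>
definition smooth_on :: "(real \<Rightarrow> real) \<Rightarrow> real set \<Rightarrow> bool" where
  "smooth_on f S \<longleftrightarrow> (\<exists>D :: nat \<Rightarrow> real \<Rightarrow> real. D 0 = f \<and>
     (\<forall>n. \<forall>x\<in>S. (D n has_real_derivative D (Suc n) x) (at x within S)))"

definition shah_dist :: "(real \<Rightarrow> real) \<Rightarrow> real \<Rightarrow> real \<Rightarrow> real" where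
  "shah_dist \<theta> x y = \<bar>LBINT u=x..y. 1 / sqrt (\<theta> u)\<bar>"

definition jko_step :: "(real \<Rightarrow> real) \<Rightarrow> (real \<Rightarrow> real) \<Rightarrow> real \<Rightarrow> real \<Rightarrow> real \<Rightarrow> bool" where
  "jko_step \<theta> V h Xn Xn1 \<longleftrightarrow> Xn1 \<in> {0..1} \<and>
     (\<forall>Y\<in>{0..1}. shah_dist \<theta> Xn1 Xn ^ 2 / (2*h) + V Xn1 \<le> shah_dist \<theta> Y Xn ^ 2 / (2*h) + V Y)"

text \<open>Piecewise-constant interpolation: X_h(0) = X^0, X_h(t) = X^{n+1} on (nh,(n+1)h].\<close>
definition pc_interp :: "real \<Rightarrow> (nat \<Rightarrow> real) \<Rightarrow> real \<Rightarrow> real" where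
  "pc_interp h Xs t = Xs (nat \<lceil>t / h\<rceil>)"

definition replicator_sol :: "(real \<Rightarrow> real) \<Rightarrow> (real \<Rightarrow> real) \<Rightarrow> real \<Rightarrow> (real \<Rightarrow> real) \<Rightarrow> bool" where
  "replicator_sol \<theta> V' X0 X \<longleftrightarrow> X 0 = X0 \<and>
     (\<forall>t\<ge>0. X t \<in> {0..1} \<and>
        (X has_real_derivative - \<theta> (X t) * V' (X t)) (at t within {0..}))"

end

theory Submission
  imports Defs "HOL-Analysis.Analysis"
begin

lemma ode_pos:
  fixes F :: "real \<Rightarrow> real" and K x0 :: real
  assumes Fc: "continuous_on {0..1} F" and K: "K > 0"
    and lip: "\<And>x y. x\<in>{0..1} \<Longrightarrow> y\<in>{0..1} \<Longrightarrow> \<bar>F x - F y\<bar> \<le> K * \<bar>x - y\<bar>"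
    and F0: "F 0 = 0" and F1: "F 1 = 0" and x0: "x0 \<in> {0..1}" and pos: "F x0 > 0"
  shows "\<exists>X. X 0 = x0 \<and> (\<forall>t\<ge>0. X t \<in> {0<..<1} \<and> (X has_real_derivative F (X t)) (at t))"
proof -
  have "x0 \<noteq> 0" "x0 \<noteq> 1" using pos F0 F1 by auto
  then have x0': "0 < x0" "x0 < 1" using x0 by auto
  define Z where "Z = {x0..1} \<inter> F -` {0}"
  have Zc: "closed Z" unfolding Z_def
    by (intro continuous_closed_preimage continuous_on_subset[OF Fc]) (use x0 in auto)
  have Z1: "1 \<in> Z" using x0 F1 by (auto simp: Z_def)
  have bdd: "bdd_below Z" unfolding Z_def by (rule bdd_belowI[of _ x0]) auto
  define b where "b = Inf Z"
  have bZ: "b \<in> Z" unfolding b_def using closed_contains_Inf[OF _ bdd Zc] Z1 by auto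
  then have Fb: "F b = 0" and b1: "b \<le> 1" and bx0: "x0 \<le> b" by (auto simp: Z_def)
  have "b \<noteq> x0" using Fb pos by auto
  then have x0b: "x0 < b" using bx0 by auto
  have Fpos1: "F u > 0" if u: "x0 \<le> u" "u < b" for u
  proof (rule ccontr)
    assume "\<not> F u > 0"
    then have "F u \<le> 0" by simp
    then obtain w where w: "x0 \<le> w" "w \<le> u" "F w = 0"
      using IVT2'[of F u 0 x0] pos u continuous_on_subset[OF Fc, of "{x0..u}"] x0 b1 by auto
    then have "w \<in> Z" using u b1 by (auto simp: Z_def)
    then have "b \<le> w" unfolding b_def using bdd by (rule cInf_lower)
    then show False using w u by auto
  qed
  have Fle: "F u \<le> K * (b - u)" if "x0 \<le> u" "u \<le> b" for u
    using lip[of u b] that x0 b1 Fb by auto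
  obtain d where d: "d > 0" "\<And>y. y \<in> {0..1} \<Longrightarrow> dist y x0 < d \<Longrightarrow> dist (F y) (F x0) < F x0"
    using Fc x0 pos unfolding continuous_on_iff by metis
  define l where "l = max (x0 - d/2) (x0/2)"
  have l: "0 < l" "l < x0" using d x0' by (auto simp: l_def)
  have Fpos: "F u > 0" if u: "l \<le> u" "u < b" for u
  proof (cases "x0 \<le> u")
    case True then show ?thesis using Fpos1 u by auto
  next
    case False
    then have "dist u x0 < d" using u d by (auto simp: l_def dist_real_def)
    then have "dist (F u) (F x0) < F x0" using d(2)[of u] u l x0' False by auto
    then show ?thesis by (auto simp: dist_real_def)
  qed
  define iF where "iF u = 1 / F u" for u
  have iFc: "continuous_on {l..c} iF" if "c < b" for c
  proof -
    have "continuous_on {l..c} F" using that l b1 by (intro continuous_on_subset[OF Fc]) auto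
    moreover have "\<forall>u\<in>{l..c}. F u \<noteq> 0" using Fpos that by force
    ultimately show ?thesis unfolding iF_def by (intro continuous_intros) auto
  qed
  define Gi where "Gi x = integral {l..x} iF - integral {l..x0} iF" for x
  have Gi_d: "(Gi has_real_derivative iF x) (at x)" if x: "l < x" "x < b" for x
  proof -
    define c where "c = (x + b) / 2"
    have c: "x < c" "c < b" using x by (auto simp: c_def)
    have "((\<lambda>y. integral {l..y} iF) has_real_derivative iF x) (at x within {l..c})"
      by (rule integral_has_real_derivative[OF iFc[OF c(2)]]) (use x c in auto)
    moreover have "at x within {l..c} = at x"
      using x c interior_atLeastAtMost_real[of l c] by (intro at_within_interior) auto
    ultimately have "((\<lambda>y. integral {l..y} iF) has_real_derivative iF x) (at x)" by simp
    then show ?thesis unfolding Gi_def[abs_def] using DERIV_diff[OF _ DERIV_const] by fastforce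
  qed
  have iFpos: "iF x > 0" if "l \<le> x" "x < b" for x using Fpos[OF that] by (simp add: iF_def)
  have Gi_x0: "Gi x0 = 0" by (simp add: Gi_def)
  have Gi_strict: "Gi x < Gi y" if xy: "l < x" "x < y" "y < b" for x y
  proof (rule DERIV_pos_imp_increasing[of x y Gi])
    show "x < y" using xy by simp
    fix z assume "x \<le> z" "z \<le> y"
    then have z: "l < z" "z < b" using xy by auto
    show "\<exists>D. (Gi has_real_derivative D) (at z) \<and> D > 0"
      using Gi_d[OF z] iFpos[of z] z by auto
  qed
  have Gi_isCont: "isCont Gi x" if "l < x" "x < b" for x
    using Gi_d[OF that] by (rule DERIV_isCont)
  have Gi_conton: "continuous_on {x..y} Gi" if "l < x" "y < b" for x y
    using Gi_isCont that by (intro continuous_at_imp_continuous_on) auto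
  have Gi_big: "Gi x \<ge> (ln (b - x0) - ln (b - x)) / K" if x: "x0 \<le> x" "x < b" for x
  proof -
    define H where "H z = Gi z + ln (b - z) / K" for z
    have "H x0 \<le> H x"
    proof (rule DERIV_nonneg_imp_nondecreasing[OF x(1)])
      fix z assume z: "x0 \<le> z" "z \<le> x"
      have bz: "b - z > 0" using z x by auto
      have "((\<lambda>z. ln (b - z)) has_real_derivative inverse (b - z) * (0 - 1)) (at z)"
        using DERIV_chain2[where f=ln and g="\<lambda>z. b - z" and x=z, OF _ DERIV_diff[OF DERIV_const DERIV_ident]] DERIV_ln[OF bz] by simp
      then have "(H has_real_derivative iF z + inverse (b - z) * (0 - 1) / K) (at z)"
        unfolding H_def[abs_def] using Gi_d[of z] z x l by (intro DERIV_add DERIV_cdivide) auto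
      moreover have "iF z + inverse (b - z) * (0 - 1) / K \<ge> 0"
      proof -
        have Fz: "0 < F z" "F z \<le> K * (b - z)" using Fpos[of z] Fle[of z] z x l by auto
        have "inverse (K * (b - z)) \<le> inverse (F z)" using Fz by (intro le_imp_inverse_le) auto
        moreover have "inverse (b - z) * (0 - 1) / K = - inverse (K * (b - z))"
          by (simp add: inverse_mult_distrib divide_inverse mult.commute)
        moreover have "iF z = inverse (F z)" by (simp add: iF_def inverse_eq_divide)
        ultimately show ?thesis by linarith
      qed
      ultimately show "\<exists>y. (H has_real_derivative y) (at z) \<and> 0 \<le> y" by blast
    qed
    moreover have "(ln (b - x0) - ln (b - x)) / K = ln (b - x0) / K - ln (b - x) / K"
      by (simp add: diff_divide_distrib)
    ultimately show ?thesis using Gi_x0 unfolding H_def by linarith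
  qed
  have surj: "\<exists>x. x0 \<le> x \<and> x < b \<and> Gi x = t" if t: "t \<ge> 0" for t
  proof -
    define xt where "xt = b - (b - x0) * exp (- K * t)"
    have e: "exp (- K * t) \<le> 1" "exp (- K * t) > 0" using K t by auto
    have "(b - x0) * exp (-K*t) \<le> (b - x0)" using e x0b by (intro mult_left_le) auto
    moreover have "(b - x0) * exp (-K*t) > 0" using e x0b by simp
    ultimately have xt: "x0 \<le> xt" "xt < b" by (auto simp: xt_def)
    have "b - xt = (b - x0) * exp (-K*t)" by (simp add: xt_def)
    moreover have "ln ((b - x0) * exp (-K*t)) = ln (b - x0) + ln (exp (-K*t))"
      using x0b by (intro ln_mult_pos) auto
    ultimately have "ln (b - xt) = ln (b - x0) - K * t" by simp
    then have "Gi xt \<ge> t" using Gi_big[OF xt] K by simp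
    then obtain x where "x0 \<le> x" "x \<le> xt" "Gi x = t"
      using IVT'[of Gi x0 t xt] Gi_x0 t xt Gi_conton[of x0 xt] l by auto
    then show ?thesis using xt by auto
  qed
  define l' where "l' = (l + x0) / 2"
  have l': "l < l'" "l' < x0" using l by (auto simp: l'_def)
  define a0 where "a0 = Gi l'"
  have a0: "a0 < 0" using Gi_strict[of l' x0] l' x0b Gi_x0 by (auto simp: a0_def)
  have ex: "\<exists>x. l < x \<and> x < b \<and> Gi x = y" if y: "y > a0" for y
  proof (cases "y \<ge> 0")
    case True
    then obtain x where "x0 \<le> x" "x < b" "Gi x = y" using surj[of y] by blast
    then show ?thesis using l by (intro exI[of _ x]) auto
  next
    case False
    then obtain x where "l' \<le> x" "x \<le> x0" "Gi x = y"
      using IVT'[of Gi l' y x0] y Gi_x0 Gi_conton[of l' x0] l' x0b by (auto simp: a0_def)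
    then show ?thesis using l' x0b by (intro exI[of _ x]) auto
  qed
  have uniq: "x = x'" if "l < x" "x < b" "l < x'" "x' < b" "Gi x = Gi x'" for x x'
    using Gi_strict[of x x'] Gi_strict[of x' x] that by (cases x x' rule: linorder_cases) auto
  define X where "X y = (THE x. l < x \<and> x < b \<and> Gi x = y)" for y
  have X: "l < X y \<and> X y < b \<and> Gi (X y) = y" if "y > a0" for y
  proof -
    have "\<exists>!x. l < x \<and> x < b \<and> Gi x = y" using ex[OF that] uniq by blast
    then show ?thesis unfolding X_def by (rule theI')
  qed
  have XGi: "X (Gi z) = z" if "l < z" "z < b" for z
    unfolding X_def by (rule the_equality) (use that uniq in auto)
  have X0: "X 0 = x0" using XGi[of x0] Gi_x0 l x0b by simp
  have "X t \<in> {0<..<1} \<and> (X has_real_derivative F (X t)) (at t)" if t: "t \<ge> 0" for t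
  proof -
    have ta: "t > a0" using t a0 by auto
    have Xt: "l < X t" "X t < b" "Gi (X t) = t" using X[OF ta] by auto
    have "x0 \<le> X t"
    proof (rule ccontr)
      assume "\<not> x0 \<le> X t"
      then have "Gi (X t) < Gi x0" using Gi_strict[of "X t" x0] Xt x0b by auto
      then show False using Xt Gi_x0 t by auto
    qed
    then have in01: "X t \<in> {0<..<1}" using Xt x0' b1 by auto
    define dd where "dd = min (X t - l) (b - X t) / 2"
    have dd: "dd > 0" using Xt by (auto simp: dd_def)
    have zz: "l < z \<and> z < b" if "\<bar>z - X t\<bar> \<le> dd" for z
    proof -
      have "\<bar>z - X t\<bar> * 2 \<le> X t - l" "\<bar>z - X t\<bar> * 2 \<le> b - X t" using that by (auto simp: dd_def)
      then show ?thesis using Xt by (smt (verit))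
    qed
    have "isCont X (Gi (X t))"
      by (rule isCont_inverse_function[OF dd]) (use zz XGi Gi_isCont in auto)
    then have cont: "isCont X t" using Xt by simp
    have "(X has_real_derivative inverse (iF (X t))) (at t)"
    proof (rule DERIV_inverse_function[where a=a0 and b="t+1"])
      show "(Gi has_real_derivative iF (X t)) (at (X t))" using Gi_d Xt by auto
      show "iF (X t) \<noteq> 0" using iFpos[of "X t"] Xt by auto
      show "a0 < t" "t < t + 1" using ta by auto
      show "\<And>y. a0 < y \<Longrightarrow> y < t + 1 \<Longrightarrow> Gi (X y) = y" using X by auto
      show "isCont X t" by (rule cont)
    qed
    then show ?thesis using in01 by (simp add: iF_def)
  qed
  then show ?thesis using X0 by blast
qed

lemma ode_exists:
  fixes F :: "real \<Rightarrow> real" and K x0 :: real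
  assumes Fc: "continuous_on {0..1} F" and K: "K > 0"
    and lip: "\<And>x y. x\<in>{0..1} \<Longrightarrow> y\<in>{0..1} \<Longrightarrow> \<bar>F x - F y\<bar> \<le> K * \<bar>x - y\<bar>"
    and F0: "F 0 = 0" and F1: "F 1 = 0" and x0: "x0 \<in> {0..1}"
  shows "\<exists>X. X 0 = x0 \<and> (\<forall>t\<ge>0. X t \<in> {0..1} \<and> (X has_real_derivative F (X t)) (at t))
     \<and> ((\<forall>t\<ge>0. X t \<in> {0<..<1}) \<or> (F x0 = 0 \<and> (\<forall>t. X t = x0)))"
proof -
  consider "F x0 > 0" | "F x0 = 0" | "F x0 < 0" by linarith
  then show ?thesis
  proof cases
    case 1
    then obtain X where X: "X 0 = x0" "\<forall>t\<ge>0. X t \<in> {0<..<1} \<and> (X has_real_derivative F (X t)) (at t)"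
      using ode_pos[OF Fc K lip F0 F1 x0] by blast
    then show ?thesis by (intro exI[of _ X]) auto
  next
    case 2
    show ?thesis using 2 x0 by (intro exI[of _ "\<lambda>t. x0"]) auto
  next
    case 3
    define F' where "F' y = - F (1 - y)" for y
    have Fc': "continuous_on {0..1} F'" unfolding F'_def
      by (intro continuous_intros continuous_on_compose2[OF Fc]) auto
    have lip': "\<bar>F' x - F' y\<bar> \<le> K * \<bar>x - y\<bar>" if "x\<in>{0..1}" "y\<in>{0..1}" for x y
      using lip[of "1 - x" "1 - y"] that by (auto simp: F'_def abs_minus_commute)
    obtain X where X: "X 0 = 1 - x0" "\<forall>t\<ge>0. X t \<in> {0<..<1} \<and> (X has_real_derivative F' (X t)) (at t)"
      using ode_pos[OF Fc' K lip', of "1 - x0"] 3 x0 F0 F1 by (auto simp: F'_def)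
    have "(\<lambda>t. 1 - X t) 0 = x0" using X by simp
    moreover have D: "(\<lambda>t. 1 - X t) t \<in> {0<..<1} \<and> ((\<lambda>t. 1 - X t) has_real_derivative F ((\<lambda>t. 1 - X t) t)) (at t)"
      if "t \<ge> 0" for t
    proof -
      have "((\<lambda>t. 1 - X t) has_real_derivative 0 - F' (X t)) (at t)"
        using X that by (intro DERIV_diff DERIV_const) auto
      then show ?thesis using X that by (auto simp: F'_def)
    qed
    moreover have "(\<lambda>t. 1 - X t) t \<in> {0..1}" if "t \<ge> 0" for t
      using D[OF that] by auto
    ultimately show ?thesis by (intro exI[of _ "\<lambda>t. 1 - X t"]) blast
  qed
qed


lemma cont_of_der:
  "(\<And>x. x\<in>S \<Longrightarrow> (f has_real_derivative f' x) (at x within S)) \<Longrightarrow> continuous_on S f"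
  by (meson DERIV_continuous continuous_on_eq_continuous_within)

lemma cont_bound:
  fixes f :: "real \<Rightarrow> real"
  assumes "continuous_on {a..b} f" shows "\<exists>B. \<forall>x\<in>{a..b}. \<bar>f x\<bar> \<le> B"
proof -
  have "bounded (f ` {a..b})"
    using compact_continuous_image[OF assms compact_Icc] compact_imp_bounded by blast
  then show ?thesis unfolding bounded_real by auto
qed

lemma hh_int: "set_integrable lborel {0<..<1::real} (\<lambda>u. 1 / sqrt u + 1 / sqrt (1 - u))"
proof -
  let ?h = "\<lambda>u::real. 1 / sqrt u + 1 / sqrt (1 - u)"
  have "(?h has_integral ((2 * sqrt 1 - 2 * sqrt (1 - 1)) - (2 * sqrt 0 - 2 * sqrt (1 - 0)))) {0..1}"
  proof (rule fundamental_theorem_of_calculus_interior)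
    show "continuous_on {0..1} (\<lambda>u::real. 2 * sqrt u - 2 * sqrt (1 - u))"
      by (intro continuous_intros)
    fix x :: real assume x: "x \<in> {0<..<1}"
    have d1: "(sqrt has_real_derivative inverse (sqrt x) / 2) (at x)"
      using DERIV_real_sqrt x by auto
    have "((\<lambda>u. 1 - u) has_real_derivative (0 - 1)) (at x)"
      by (intro derivative_intros)
    then have d2: "((\<lambda>u. sqrt (1 - u)) has_real_derivative inverse (sqrt (1 - x)) / 2 * (0 - 1)) (at x)"
      using x by (intro DERIV_chain2[where f=sqrt] DERIV_real_sqrt) auto
    have "((\<lambda>u::real. 2 * sqrt u - 2 * sqrt (1 - u)) has_real_derivative
        2 * (inverse (sqrt x) / 2) - 2 * (inverse (sqrt (1 - x)) / 2 * (0 - 1))) (at x)"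
      by (intro DERIV_diff DERIV_cmult d1 d2)
    moreover have "2 * (inverse (sqrt x) / 2) - 2 * (inverse (sqrt (1 - x)) / 2 * (0 - 1)) = ?h x"
      by (simp add: inverse_eq_divide)
    ultimately have "((\<lambda>u::real. 2 * sqrt u - 2 * sqrt (1 - u)) has_real_derivative ?h x) (at x)"
      by (rule DERIV_cong)
    then show "((\<lambda>u::real. 2 * sqrt u - 2 * sqrt (1 - u)) has_vector_derivative ?h x) (at x)"
      by (simp add: has_real_derivative_iff_has_vector_derivative[symmetric])
  qed simp
  then have "?h integrable_on {0..1}" by blast
  then have "?h integrable_on {0<..<1}"
    using integrable_on_open_interval[of ?h 0 1] by simp
  then have "?h absolutely_integrable_on {0<..<1}"
    by (rule nonnegative_absolutely_integrable_1) auto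
  then have "integrable lebesgue (\<lambda>x. indicator {0<..<1} x *\<^sub>R ?h x)"
    by (simp add: set_integrable_def)
  moreover have "(\<lambda>x. indicator {0<..<1::real} x *\<^sub>R ?h x) \<in> borel_measurable lborel"
  proof -
    have "(\<lambda>x. indicator {0<..<1::real} x *\<^sub>R ?h x) \<in> borel_measurable borel"
      by (intro borel_measurable_continuous_on_indicator) (auto intro!: continuous_intros)
    then show ?thesis by simp
  qed
  ultimately show ?thesis
    unfolding set_integrable_def using integrable_completion by blast
qed

lemma aux_ineq:
  fixes a x B :: real
  assumes "0 \<le> a" "a \<le> 1/2" "0 \<le> x" "(1 - a) * x \<le> B"
  shows "x \<le> B * (1 + 2 * a)"
proof -
  have "(1/2 - a) * x \<ge> 0" using assms by simp
  then have x2: "x \<le> 2 * B" using assms(4) by (simp add: algebra_simps)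
  have "a * x \<le> a * (2 * B)" using x2 assms(1) by (rule mult_left_mono)
  then show ?thesis using assms(4) by (simp add: algebra_simps)
qed

lemma abs3: "\<bar>a - b - c\<bar> \<le> \<bar>a\<bar> + \<bar>b\<bar> + \<bar>c::real\<bar>"
  by (smt (verit))

lemma abs_tri: "\<bar>a - c\<bar> \<le> \<bar>a - b\<bar> + \<bar>b - (c::real)\<bar>"
  by (smt (verit))

locale jko =
  fixes th th1 th2 V V1 V2 :: "real \<Rightarrow> real"
  assumes th_d: "\<And>x. x \<in> {0..1} \<Longrightarrow> (th has_real_derivative th1 x) (at x within {0..1})"
    and th1_d: "\<And>x. x \<in> {0..1} \<Longrightarrow> (th1 has_real_derivative th2 x) (at x within {0..1})"
    and th2_c: "continuous_on {0..1} th2"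
    and V_d: "\<And>x. x \<in> {0..1} \<Longrightarrow> (V has_real_derivative V1 x) (at x within {0..1})"
    and V1_d: "\<And>x. x \<in> {0..1} \<Longrightarrow> (V1 has_real_derivative V2 x) (at x within {0..1})"
    and V2_c: "continuous_on {0..1} V2"
    and th_pos: "\<And>x. x \<in> {0<..<1} \<Longrightarrow> th x > 0"
    and th_0: "th 0 = 0" and th_1: "th 1 = 0"
    and th1_0: "th1 0 > 0" and th1_1: "th1 1 < 0"
begin

lemma th_c: "continuous_on {0..1} th" using cont_of_der th_d by blast
lemma th1_c: "continuous_on {0..1} th1" using cont_of_der th1_d by blast
lemma V_c: "continuous_on {0..1} V" using cont_of_der V_d by blast
lemma V1_c: "continuous_on {0..1} V1" using cont_of_der V1_d by blast

lemma th_nonneg: "x \<in> {0..1} \<Longrightarrow> th x \<ge> 0"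
  using th_pos[of x] th_0 th_1 by (cases "x = 0 \<or> x = 1") (auto simp: less_le)

lemma at_interior: "(x::real) \<in> {0<..<1} \<Longrightarrow> at x within {0..1} = at x"
  using interior_atLeastAtMost_real[of 0 1] by (intro at_within_interior) auto

lemma th_lower: "\<exists>c>0. \<forall>u\<in>{0<..<1}. th u \<ge> c * min u (1-u)"
proof -
  have "((\<lambda>y. (th y - th 0) / (y - 0)) \<longlongrightarrow> th1 0) (at 0 within {0..1})"
    using th_d[of 0] unfolding has_field_derivative_iff by simp
  then have "eventually (\<lambda>y. th1 0 / 2 < (th y - th 0) / (y - 0)) (at 0 within {0..1})"
    by (rule order_tendstoD) (use th1_0 in auto)
  then obtain d1 where d1: "d1 > 0" "\<And>y. y \<in> {0..1} \<Longrightarrow> y \<noteq> 0 \<Longrightarrow> dist y 0 < d1 \<Longrightarrow> th1 0 / 2 < th y / y"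
    unfolding eventually_at using th_0 by auto
  have "((\<lambda>y. (th y - th 1) / (y - 1)) \<longlongrightarrow> th1 1) (at 1 within {0..1})"
    using th_d[of 1] unfolding has_field_derivative_iff by simp
  then have "eventually (\<lambda>y. (th y - th 1) / (y - 1) < th1 1 / 2) (at 1 within {0..1})"
    by (rule order_tendstoD) (use th1_1 in auto)
  then obtain d2 where d2: "d2 > 0" "\<And>y. y \<in> {0..1} \<Longrightarrow> y \<noteq> 1 \<Longrightarrow> dist y 1 < d2 \<Longrightarrow> th y / (y - 1) < th1 1 / 2"
    unfolding eventually_at using th_1 by auto
  define a where "a = min (d1/2) (1/2)"
  define b where "b = max (1 - d2/2) (1/2)"
  have ab: "0 < a" "a \<le> b" "b < 1" using d1 d2 by (auto simp: a_def b_def)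
  obtain m where m: "m \<in> {a..b}" "\<And>y. y \<in> {a..b} \<Longrightarrow> th m \<le> th y"
    using continuous_attains_inf[of "{a..b}" th] continuous_on_subset[OF th_c, of "{a..b}"] ab by auto
  have mpos: "th m > 0" using m(1) ab by (intro th_pos) auto
  define c where "c = min (min (th1 0 / 2) (- th1 1 / 2)) (th m)"
  have cpos: "c > 0" using th1_0 th1_1 mpos by (auto simp: c_def)
  have "th u \<ge> c * min u (1-u)" if u: "u \<in> {0<..<1}" for u
  proof (cases "u < a")
    case True
    then have "u < d1" using a_def u by auto
    then have "th1 0 / 2 < th u / u" using d1(2)[of u] u by (auto simp: dist_real_def)
    then have "th1 0 / 2 * u \<le> th u" using u by (simp add: field_simps)
    moreover have "c * min u (1-u) \<le> th1 0 / 2 * u"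
      using u cpos by (intro mult_mono) (auto simp: c_def)
    ultimately show ?thesis by linarith
  next
    case False
    show ?thesis
    proof (cases "u > b")
      case True
      then have "1 - u < d2" using b_def d2(1) by auto
      then have "th u / (u - 1) < th1 1 / 2" using d2(2)[of u] u by (auto simp: dist_real_def)
      then have "- th1 1 / 2 * (1 - u) \<le> th u" using u by (simp add: field_simps)
      moreover have "c * min u (1-u) \<le> - th1 1 / 2 * (1 - u)"
        using u cpos by (intro mult_mono) (auto simp: c_def)
      ultimately show ?thesis by linarith
    next
      case False2: False
      then have "th m \<le> th u" using m(2)[of u] False by auto
      moreover have "c * min u (1-u) \<le> th m * 1"
        using u cpos by (intro mult_mono) (auto simp: c_def)
      ultimately show ?thesis by linarith
    qed
  qed
  then show ?thesis using cpos by blast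
qed

definition k :: "real \<Rightarrow> real" where "k u = 1 / sqrt (th u)"

lemma k_c: "continuous_on {0<..<1} k"
proof -
  have nz: "\<And>u. u\<in>{0<..<1} \<Longrightarrow> th u \<noteq> 0" using th_pos by (metis less_irrefl)
  have c1: "continuous_on {0<..<1} th" by (rule continuous_on_subset[OF th_c]) auto
  show ?thesis unfolding k_def
    by (intro continuous_on_divide continuous_on_const continuous_on_real_sqrt c1) (use nz in auto)
qed

lemma k_int01: "set_integrable lborel {0..1} k"
proof -
  obtain c where c: "c > 0" "\<And>u. u\<in>{0<..<1} \<Longrightarrow> th u \<ge> c * min u (1-u)"
    using th_lower by blast
  have fi: "set_integrable lborel {0<..<1} (\<lambda>u. (1 / sqrt c) * (1 / sqrt u + 1 / sqrt (1 - u)))"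
    using hh_int by (rule set_integrable_mult_right)
  have fm: "set_borel_measurable lborel {0<..<1} k"
    unfolding set_borel_measurable_def
  proof -
    have "(\<lambda>x. indicator {0<..<1::real} x *\<^sub>R k x) \<in> borel_measurable borel"
      by (intro borel_measurable_continuous_on_indicator k_c) auto
    then show "(\<lambda>x. indicator {0<..<1::real} x *\<^sub>R k x) \<in> borel_measurable lborel" by simp
  qed
  have bnd: "norm (k u) \<le> norm ((1 / sqrt c) * (1 / sqrt u + 1 / sqrt (1 - u)))"
    if u: "u \<in> {0<..<1}" for u
  proof -
    have tp: "th u > 0" using th_pos[OF u] .
    have m: "min u (1-u) > 0" using u by auto
    have "sqrt (c * min u (1-u)) \<le> sqrt (th u)" using c(2)[OF u] by simp
    then have "1 / sqrt (th u) \<le> 1 / sqrt (c * min u (1-u))"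
      using c m tp by (intro divide_left_mono) (auto intro!: mult_pos_pos)
    also have "\<dots> = (1 / sqrt c) * (1 / sqrt (min u (1-u)))" by (simp add: real_sqrt_mult)
    also have "\<dots> \<le> (1 / sqrt c) * (1 / sqrt u + 1 / sqrt (1 - u))"
    proof (rule mult_left_mono)
      show "1 / sqrt (min u (1-u)) \<le> 1 / sqrt u + 1 / sqrt (1 - u)"
      proof (cases "u \<le> 1 - u")
        case True then have "min u (1-u) = u" by simp
        then show ?thesis by simp
      next
        case False then have "min u (1-u) = 1 - u" by simp
        then show ?thesis by simp
      qed
    qed (use c in simp)
    finally show ?thesis using tp u c(1) by (simp add: k_def)
  qed
  have "AE x in lborel. x \<in> {0<..<1} \<longrightarrow> norm (k x) \<le> norm ((1 / sqrt c) * (1 / sqrt x + 1 / sqrt (1 - x)))"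
    using bnd by (intro AE_I2) blast
  then have "set_integrable lborel {0<..<1} k"
    by (rule set_integrable_bound[OF fi fm])
  moreover have "(\<lambda>x. indicator {0<..<1} x *\<^sub>R k x) = (\<lambda>x. indicator {0..1} x *\<^sub>R k x)"
  proof (rule ext)
    fix x :: real
    show "indicator {0<..<1} x *\<^sub>R k x = indicator {0..1} x *\<^sub>R k x"
    proof (cases "x = 0 \<or> x = 1")
      case True then show ?thesis by (auto simp: k_def th_0 th_1)
    next
      case False then show ?thesis unfolding indicator_def by auto
    qed
  qed
  ultimately show ?thesis unfolding set_integrable_def by simp
qed

lemma k_int: "k integrable_on {0..1}"
  using set_borel_integral_eq_integral(1)[OF k_int01] .

lemma k_int_sub: "0 \<le> a \<Longrightarrow> b \<le> 1 \<Longrightarrow> k integrable_on {a..b}"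
  by (cases "a \<le> b") (auto intro: integrable_subinterval_real[OF k_int])

lemma k_pos: "u \<in> {0<..<1} \<Longrightarrow> k u > 0"
  using th_pos[of u] by (simp add: k_def)

lemma k_nonneg: "u \<in> {0..1} \<Longrightarrow> k u \<ge> 0"
  using th_nonneg[of u] by (simp add: k_def)

definition S :: "real \<Rightarrow> real" where "S x = integral {0..x} k"

lemma S_0: "S 0 = 0" by (simp add: S_def)

lemma S_diff: "0 \<le> x \<Longrightarrow> x \<le> y \<Longrightarrow> y \<le> 1 \<Longrightarrow> integral {x..y} k = S y - S x"
  unfolding S_def
  using Henstock_Kurzweil_Integration.integral_combine[of 0 x y k] k_int_sub[of 0 y] by auto

lemma shah: "x \<in> {0..1} \<Longrightarrow> y \<in> {0..1} \<Longrightarrow> shah_dist th x y = \<bar>S y - S x\<bar>"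
proof -
  have keq: "(\<lambda>u. 1 / sqrt (th u)) = k" by (rule ext) (simp add: k_def)
  have main: "(LBINT u=a..b. k u) = S b - S a" if "0 \<le> a" "a \<le> b" "b \<le> 1" for a b
  proof -
    have "set_integrable lborel {a..b} k"
      by (rule set_integrable_subset[OF k_int01]) (use that in auto)
    then have "(LBINT u=a..b. k u) = integral {a..b} k"
      using that by (intro interval_integral_eq_integral) auto
    then show ?thesis using S_diff that by simp
  qed
  assume xy: "x \<in> {0..1}" "y \<in> {0..1}"
  show ?thesis
  proof (cases "x \<le> y")
    case True then show ?thesis using main[of x y] xy by (simp add: shah_dist_def keq)
  next
    case False
    then have "(LBINT u=x..y. k u) = - (S x - S y)"
      using main[of y x] xy by (simp add: interval_integral_endpoints_reverse[of x y])
    then show ?thesis by (simp add: shah_dist_def keq)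
  qed
qed

lemma S_cont: "continuous_on {0..1} S"
  unfolding S_def by (rule indefinite_integral_continuous_1[OF k_int])

lemma S_der: assumes x: "x \<in> {0<..<1}" shows "(S has_real_derivative k x) (at x)"
proof -
  define a where "a = x / 2"
  define b where "b = (x + 1) / 2"
  have ab: "0 < a" "a < x" "x < b" "b < 1" using x by (auto simp: a_def b_def)
  have "((\<lambda>y. integral {a..y} k) has_real_derivative k x) (at x within {a..b})"
    by (rule integral_has_real_derivative) (use ab in \<open>auto intro: continuous_on_subset[OF k_c]\<close>)
  moreover have "at x within {a..b} = at x"
    using ab interior_atLeastAtMost_real[of a b] by (intro at_within_interior) auto
  ultimately have "((\<lambda>y. integral {a..y} k) has_real_derivative k x) (at x)" by simp
  then have "((\<lambda>y. S a + integral {a..y} k) has_real_derivative k x) (at x)"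
    using DERIV_add[OF DERIV_const] by fastforce
  then show ?thesis
  proof (rule has_field_derivative_transform_within_open[where S="{a<..<b}"])
    fix y assume "y \<in> {a<..<b}"
    then show "S a + integral {a..y} k = S y" using S_diff[of a y] ab by auto
  qed (use ab in auto)
qed

lemma S_strict: assumes "0 \<le> x" "x < y" "y \<le> 1" shows "S x < S y"
proof (rule DERIV_pos_imp_increasing_open[of x y S])
  fix z assume "x < z" "z < y"
  then have z: "z \<in> {0<..<1}" using assms by auto
  show "\<exists>d. (S has_real_derivative d) (at z) \<and> 0 < d"
    using S_der[OF z] k_pos[OF z] by blast
qed (use assms in \<open>auto intro!: continuous_on_subset[OF S_cont]\<close>)

lemma S_mono: "0 \<le> x \<Longrightarrow> x \<le> y \<Longrightarrow> y \<le> 1 \<Longrightarrow> S x \<le> S y"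
  using S_strict[of x y] by (cases "x = y") auto

lemma S_nonneg: "x \<in> {0..1} \<Longrightarrow> S x \<ge> 0"
  using S_mono[of 0 x] S_0 by auto

definition G :: "real \<Rightarrow> real" where "G x = sqrt (th x) * V1 x"
definition F :: "real \<Rightarrow> real" where "F x = - th x * V1 x"

lemma G_c: "continuous_on {0..1} G"
  unfolding G_def by (intro continuous_intros th_c V1_c)

lemma G_0: "G 0 = 0" and G_1: "G 1 = 0" by (simp_all add: G_def th_0 th_1)

lemma F_0: "F 0 = 0" and F_1: "F 1 = 0" by (simp_all add: F_def th_0 th_1)

lemma F_c: "continuous_on {0..1} F"
  unfolding F_def by (intro continuous_intros th_c V1_c)

lemma FG: "x \<in> {0<..<1} \<Longrightarrow> F x * k x = - G x"
proof -
  assume x: "x \<in> {0<..<1}"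
  then have t: "th x > 0" using th_pos by auto
  have d: "th x / sqrt (th x) = sqrt (th x)" by (rule real_div_sqrt) (use t in simp)
  have "F x * k x = - ((th x / sqrt (th x)) * V1 x)" unfolding F_def k_def by simp
  then show ?thesis unfolding d G_def by simp
qed

lemma F0G0: "x \<in> {0..1} \<Longrightarrow> F x = 0 \<Longrightarrow> G x = 0"
  unfolding F_def G_def by auto

lemma F_lip: "\<exists>K\<ge>0. \<forall>x\<in>{0..1}. \<forall>y\<in>{0..1}. \<bar>F x - F y\<bar> \<le> K * \<bar>x - y\<bar>"
proof -
  have "continuous_on {0..1} (\<lambda>x. - (th1 x * V1 x + th x * V2 x))"
    by (intro continuous_intros th_c th1_c V1_c V2_c)
  then obtain B where B: "\<forall>x\<in>{0..1}. \<bar>- (th1 x * V1 x + th x * V2 x)\<bar> \<le> B"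
    using cont_bound by blast
  have B0: "B \<ge> 0" using B by force
  have "\<bar>F x - F y\<bar> \<le> B * \<bar>x - y\<bar>" if "x\<in>{0..1}" "y\<in>{0..1}" for x y
  proof -
    have "norm (F x - F y) \<le> B * norm (x - y)"
    proof (rule field_differentiable_bound[where f'="\<lambda>x. - (th1 x * V1 x + th x * V2 x)"])
      fix z :: real assume z: "z \<in> {0..1}"
      have "((\<lambda>x. - (th x * V1 x)) has_real_derivative - (th1 z * V1 z + V2 z * th z)) (at z within {0..1})"
        by (intro DERIV_minus DERIV_mult th_d V1_d z)
      then show "(F has_real_derivative - (th1 z * V1 z + th z * V2 z)) (at z within {0..1})"
        unfolding F_def[abs_def] by (simp add: mult.commute)
    qed (use B that in auto)
    then show ?thesis by simp
  qed
  then show ?thesis using B0 by blast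
qed

lemma G_lip: "\<exists>L\<ge>0. \<forall>x\<in>{0..1}. \<forall>y\<in>{0..1}. \<bar>G x - G y\<bar> \<le> L * \<bar>S x - S y\<bar>"
proof -
  have "continuous_on {0..1} (\<lambda>x. th1 x * V1 x / 2 + th x * V2 x)"
    by (intro continuous_intros th_c th1_c V1_c V2_c) auto
  then obtain B where B: "\<forall>x\<in>{0..1}. \<bar>th1 x * V1 x / 2 + th x * V2 x\<bar> \<le> B"
    using cont_bound by blast
  have B0: "B \<ge> 0" using B by force
  have main: "\<bar>G y - G x\<bar> \<le> B * \<bar>S y - S x\<bar>" if xy: "0 \<le> x" "x < y" "y \<le> 1" for x y
  proof -
    define hf where "hf t = (S y - S x) * G t - (G y - G x) * S t" for t
    have "continuous_on {x..y} hf"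
      unfolding hf_def
      by (intro continuous_intros continuous_on_subset[OF G_c] continuous_on_subset[OF S_cont])
         (use xy in auto)
    have der: "(hf has_real_derivative (S y - S x) * ((inverse (sqrt (th z)) / 2 * th1 z) * V1 z + V2 z * sqrt (th z))
                - (G y - G x) * k z) (at z)" if z: "z \<in> {0<..<1}" for z
    proof -
      have tz: "th z > 0" using th_pos z by auto
      have thd: "(th has_real_derivative th1 z) (at z)" using th_d[of z] at_interior[OF z] z by auto
      have v1d: "(V1 has_real_derivative V2 z) (at z)" using V1_d[of z] at_interior[OF z] z by auto
      have sd: "((\<lambda>t. sqrt (th t)) has_real_derivative inverse (sqrt (th z)) / 2 * th1 z) (at z)"
        by (rule DERIV_chain2[OF DERIV_real_sqrt[OF tz] thd])
      have Gd: "(G has_real_derivative (inverse (sqrt (th z)) / 2 * th1 z) * V1 z + V2 z * sqrt (th z)) (at z)"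
        unfolding G_def[abs_def] by (rule DERIV_mult[OF sd v1d])
      show ?thesis unfolding hf_def[abs_def]
        by (intro DERIV_diff DERIV_cmult Gd S_der z)
    qed
    have "hf differentiable (at z)" if "x < z" "z < y" for z
    proof -
      have "z \<in> {0<..<1}" using that xy by auto
      then show ?thesis using der unfolding real_differentiable_def by blast
    qed
    then obtain l z where lz: "x < z" "z < y" "(hf has_real_derivative l) (at z)" "hf y - hf x = (y - x) * l"
      using MVT[OF \<open>x < y\<close> \<open>continuous_on {x..y} hf\<close>] by blast
    have z: "z \<in> {0<..<1}" using lz xy by auto
    have tz: "th z > 0" using th_pos z by auto
    have "hf y - hf x = 0" unfolding hf_def by (simp add: algebra_simps)
    then have "l = 0" using lz xy by simp
    then have e: "(S y - S x) * ((inverse (sqrt (th z)) / 2 * th1 z) * V1 z + V2 z * sqrt (th z)) = (G y - G x) * k z"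
      using DERIV_unique[OF lz(3) der[OF z]] by simp
    define r where "r = sqrt (th z)"
    have r: "r > 0" "r * r = th z" using tz by (auto simp: r_def)
    have "G y - G x = (G y - G x) * k z * r" using r by (simp add: k_def r_def)
    also have "\<dots> = (S y - S x) * ((inverse r / 2 * th1 z) * V1 z + V2 z * r) * r"
      using e by (simp add: r_def)
    also have "\<dots> = (S y - S x) * (th1 z * V1 z / 2 + th z * V2 z)"
      unfolding r(2)[symmetric] using r(1) by (simp add: field_simps)
    finally have "\<bar>G y - G x\<bar> = \<bar>S y - S x\<bar> * \<bar>th1 z * V1 z / 2 + th z * V2 z\<bar>"
      by (simp add: abs_mult)
    also have "\<dots> \<le> \<bar>S y - S x\<bar> * B" using B z by (intro mult_left_mono) auto
    finally show ?thesis by (simp add: mult.commute)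
  qed
  have "\<bar>G x - G y\<bar> \<le> B * \<bar>S x - S y\<bar>" if "x\<in>{0..1}" "y\<in>{0..1}" for x y
  proof -
    consider "x < y" | "x = y" | "y < x" by linarith
    then show ?thesis
    proof cases
      case 1 then show ?thesis using main[of x y] that by (simp add: abs_minus_commute)
    next
      case 2 then show ?thesis by simp
    next
      case 3 then show ?thesis using main[of y x] that by simp
    qed
  qed
  then show ?thesis using B0 by blast
qed

definition Lg :: real where
  "Lg = (SOME L. L \<ge> 0 \<and> (\<forall>x\<in>{0..1}. \<forall>y\<in>{0..1}. \<bar>G x - G y\<bar> \<le> L * \<bar>S x - S y\<bar>))"

lemma Lg: "Lg \<ge> 0" "x \<in> {0..1} \<Longrightarrow> y \<in> {0..1} \<Longrightarrow> \<bar>G x - G y\<bar> \<le> Lg * \<bar>S x - S y\<bar>"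
  using someI_ex[OF G_lip] unfolding Lg_def[symmetric] by auto

lemma GK: "z \<in> {0<..<1} \<Longrightarrow> G z * k z = V1 z"
proof -
  assume z: "z \<in> {0<..<1}"
  then have "th z > 0" using th_pos by auto
  then show ?thesis by (simp add: G_def k_def)
qed

lemma step:
  assumes h: "h > 0" "h * Lg < 1" and xn: "xn \<in> {0..1}" and js: "jko_step th V h xn m"
  shows "S m + h * G m = S xn"
proof -
  define psi where "psi x = S x + h * G x - S xn" for x
  define phi where "phi x = (S x - S xn) ^ 2 / (2 * h) + V x" for x
  have m01: "m \<in> {0..1}" using js by (simp add: jko_step_def)
  have mmin: "phi m \<le> phi y" if "y \<in> {0..1}" for y
  proof -
    have "shah_dist th m xn ^ 2 / (2*h) + V m \<le> shah_dist th y xn ^ 2 / (2*h) + V y"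
      using js that by (simp add: jko_step_def)
    then show ?thesis using shah[OF m01 xn] shah[OF that xn]
      by (simp add: phi_def power2_abs power2_commute)
  qed
  have psi_c: "continuous_on {0..1} psi"
    unfolding psi_def by (intro continuous_intros S_cont G_c)
  have phi_c: "continuous_on {0..1} phi"
    unfolding phi_def by (intro continuous_intros S_cont V_c) (use h in auto)
  have psi_inc: "psi x < psi y" if "0 \<le> x" "x < y" "y \<le> 1" for x y
  proof -
    have sxy: "S x < S y" using S_strict that by auto
    have "\<bar>G y - G x\<bar> \<le> Lg * \<bar>S y - S x\<bar>" using Lg(2)[of y x] that by auto
    then have a: "G x - G y \<le> Lg * (S y - S x)" using sxy by (simp add: abs_le_iff)
    have "h * (G x - G y) \<le> h * (Lg * (S y - S x))" using a h by (intro mult_left_mono) auto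
    then have "h * (G y - G x) \<ge> - (h * Lg) * (S y - S x)" by (simp add: algebra_simps)
    moreover have "(h * Lg) * (S y - S x) < 1 * (S y - S x)"
      using h sxy by (intro mult_strict_right_mono) auto
    ultimately show ?thesis unfolding psi_def by (simp add: algebra_simps)
  qed
  have "psi 0 \<le> 0" using S_nonneg[OF xn] by (simp add: psi_def S_0 G_0)
  moreover have "0 \<le> psi 1" using S_mono[of xn 1] xn by (simp add: psi_def G_1)
  ultimately obtain r where r: "0 \<le> r" "r \<le> 1" "psi r = 0"
    using IVT'[of psi 0 0 1] psi_c by auto
  have phi_d: "(phi has_real_derivative psi z * k z / h) (at z)" if z: "z \<in> {0<..<1}" for z
  proof -
    have Vd: "(V has_real_derivative V1 z) (at z)" using V_d[of z] at_interior[OF z] z by auto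
    have "((\<lambda>x. (S x - S xn) ^ 2) has_real_derivative of_nat 2 * ((k z - 0) * (S z - S xn) ^ (2 - Suc 0))) (at z)"
      by (intro DERIV_power DERIV_diff S_der z DERIV_const)
    then have "(phi has_real_derivative (of_nat 2 * ((k z - 0) * (S z - S xn) ^ (2 - Suc 0))) / (2 * h) + V1 z) (at z)"
      unfolding phi_def[abs_def] by (intro DERIV_add DERIV_cdivide Vd)
    moreover have "(of_nat 2 * ((k z - 0) * (S z - S xn) ^ (2 - Suc 0))) / (2 * h) + V1 z = psi z * k z / h"
    proof -
      have "psi z * k z / h = (S z - S xn) * k z / h + G z * k z"
        using h by (simp add: psi_def field_simps)
      then have a: "psi z * k z / h = (S z - S xn) * k z / h + V1 z" using GK[OF z] by simp
      have b: "of_nat 2 * ((k z - 0) * (S z - S xn) ^ (2 - Suc 0)) / (2 * h) + V1 z = (S z - S xn) * k z / h + V1 z"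
        using h by (simp add: field_simps)
      show ?thesis using a b by simp
    qed
    ultimately show ?thesis by simp
  qed
  have kp: "\<And>z. z \<in> {0<..<1} \<Longrightarrow> k z > 0" by (rule k_pos)
  have "m = r"
  proof (rule ccontr)
    assume "m \<noteq> r"
    then consider "m < r" | "r < m" by linarith
    then show False
    proof cases
      case 1
      have "phi differentiable (at z)" if "m < z" "z < r" for z
        using phi_d[of z] that m01 r unfolding real_differentiable_def by force
      then obtain l z where lz: "m < z" "z < r" "(phi has_real_derivative l) (at z)" "phi r - phi m = (r - m) * l"
        using MVT[OF 1 continuous_on_subset[OF phi_c]] m01 r by auto
      have z: "z \<in> {0<..<1}" using lz m01 r by auto
      have "l = psi z * k z / h" using DERIV_unique[OF lz(3) phi_d[OF z]] .
      moreover have "psi z < 0" using psi_inc[of z r] lz m01 r by auto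
      ultimately have "l < 0" using kp[OF z] h by (simp add: divide_neg_pos mult_neg_pos)
      moreover have "(r - m) * l < 0" using \<open>l < 0\<close> 1 by (intro mult_pos_neg) auto
      ultimately have "phi r < phi m" using lz(4) by linarith
      then show False using mmin[of r] r by auto
    next
      case 2
      have "phi differentiable (at z)" if "r < z" "z < m" for z
        using phi_d[of z] that m01 r unfolding real_differentiable_def by force
      then obtain l z where lz: "r < z" "z < m" "(phi has_real_derivative l) (at z)" "phi m - phi r = (m - r) * l"
        using MVT[OF 2 continuous_on_subset[OF phi_c]] m01 r by auto
      have z: "z \<in> {0<..<1}" using lz m01 r by auto
      have "l = psi z * k z / h" using DERIV_unique[OF lz(3) phi_d[OF z]] .
      moreover have "psi z > 0" using psi_inc[of r z] lz m01 r by auto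
      ultimately have "l > 0" using kp[OF z] h by simp
      moreover have "(m - r) * l > 0" using \<open>l > 0\<close> 2 by simp
      ultimately have "phi r < phi m" using lz(4) by linarith
      then show False using mmin[of r] r by auto
    qed
  qed
  then show ?thesis using r(3) by (simp add: psi_def)
qed

lemma Sinv_uc: "e > 0 \<Longrightarrow> \<exists>d>0. \<forall>x\<in>{0..1}. \<forall>y\<in>{0..1}. \<bar>S x - S y\<bar> < d \<longrightarrow> \<bar>x - y\<bar> < e"
proof -
  assume e: "e > 0"
  show ?thesis
  proof (cases "e > 1")
    case True
    then show ?thesis by (intro exI[of _ 1]) auto
  next
    case False
    then have e1: "e \<le> 1" by simp
    have "continuous_on {0..1-e} (\<lambda>x. S (x + e) - S x)"
      by (intro continuous_intros continuous_on_compose2[OF S_cont] continuous_on_subset[OF S_cont])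
         (use e in auto)
    then obtain x0 where x0: "x0 \<in> {0..1-e}" "\<And>x. x \<in> {0..1-e} \<Longrightarrow> S (x0 + e) - S x0 \<le> S (x + e) - S x"
      using continuous_attains_inf[of "{0..1-e}" "\<lambda>x. S (x + e) - S x"] e1 by auto
    define d where "d = S (x0 + e) - S x0"
    have d: "d > 0" using S_strict[of x0 "x0 + e"] x0 e by (auto simp: d_def)
    have main: "S y - S x \<ge> d" if "x \<in> {0..1}" "y \<in> {0..1}" "y - x \<ge> e" for x y
    proof -
      have "x \<in> {0..1-e}" using that by auto
      then have "d \<le> S (x + e) - S x" using x0(2) by (simp add: d_def)
      also have "\<dots> \<le> S y - S x" using S_mono[of "x + e" y] that e by auto
      finally show ?thesis .
    qed
    have "\<bar>x - y\<bar> < e" if "x\<in>{0..1}" "y\<in>{0..1}" "\<bar>S x - S y\<bar> < d" for x y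
    proof (rule ccontr)
      assume "\<not> \<bar>x - y\<bar> < e"
      then have "y - x \<ge> e \<or> x - y \<ge> e" by auto
      then show False using main[of x y] main[of y x] that by auto
    qed
    then show ?thesis using d by blast
  qed
qed

lemma G_bound: "\<exists>M\<ge>0. \<forall>x\<in>{0..1}. \<bar>G x\<bar> \<le> M"
  using cont_bound[OF G_c] by (metis abs_ge_zero atLeastAtMost_iff order_trans zero_le_one)

lemma F_bound: "\<exists>M\<ge>0. \<forall>x\<in>{0..1}. \<bar>F x\<bar> \<le> M"
  using cont_bound[OF F_c] by (metis abs_ge_zero atLeastAtMost_iff order_trans zero_le_one)

lemma lip_from_der:
  fixes f f' :: "real \<Rightarrow> real"
  assumes "\<And>t. t \<ge> 0 \<Longrightarrow> (f has_real_derivative f' t) (at t)" "\<And>t. t \<ge> 0 \<Longrightarrow> \<bar>f' t\<bar> \<le> M"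
    and "s \<ge> 0" "t \<ge> 0"
  shows "\<bar>f s - f t\<bar> \<le> M * \<bar>s - t\<bar>"
proof -
  have "norm (f s - f t) \<le> M * norm (s - t)"
    by (rule field_differentiable_bound[of "{0..}" f f'])
       (use assms in \<open>auto intro: has_field_derivative_at_within\<close>)
  then show ?thesis by simp
qed

lemma uniq:
  assumes Y: "Y 0 = x0" "\<And>t. t \<ge> 0 \<Longrightarrow> Y t \<in> {0..1} \<and> (Y has_real_derivative F (Y t)) (at t within {0..})"
    and Z: "Z 0 = x0" "\<And>t. t \<ge> 0 \<Longrightarrow> Z t \<in> {0..1} \<and> (Z has_real_derivative F (Z t)) (at t within {0..})"
    and t: "t \<ge> 0"
  shows "Y t = Z t"
proof -
  obtain K where K: "K \<ge> 0" "\<And>x y. x\<in>{0..1} \<Longrightarrow> y\<in>{0..1} \<Longrightarrow> \<bar>F x - F y\<bar> \<le> K * \<bar>x - y\<bar>"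
    using F_lip by blast
  define w where "w s = (Y s - Z s)^2 * exp (- (2 * K) * s)" for s
  have wd: "(w has_real_derivative (of_nat 2 * ((F (Y s) - F (Z s)) * (Y s - Z s) ^ (2 - Suc 0))) * exp (- (2 * K) * s)
      + exp (- (2 * K) * s) * (- (2 * K)) * (Y s - Z s)^2) (at s within {0..})" if s: "s \<ge> 0" for s
  proof -
    have "((\<lambda>s. - (2 * K) * s) has_real_derivative - (2 * K)) (at s within {0..})"
      using DERIV_cmult[OF DERIV_ident, of "- (2 * K)" s "{0..}"] by simp
    then have e: "((\<lambda>s. exp (- (2 * K) * s)) has_real_derivative exp (- (2 * K) * s) * (- (2 * K))) (at s within {0..})"
      by (rule DERIV_chain2[OF DERIV_exp])
    have "((\<lambda>s. (Y s - Z s)^2) has_real_derivative of_nat 2 * ((F (Y s) - F (Z s)) * (Y s - Z s) ^ (2 - Suc 0))) (at s within {0..})"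
      using Y(2)[OF s] Z(2)[OF s] by (intro DERIV_power DERIV_diff) auto
    then show ?thesis unfolding w_def[abs_def] using DERIV_mult[OF _ e] by blast
  qed
  have wc: "continuous_on {0..t} w"
  proof -
    have "continuous_on {0..} w"
      using wd DERIV_continuous continuous_on_eq_continuous_within by (metis atLeast_iff)
    then show ?thesis by (rule continuous_on_subset) auto
  qed
  have "w 0 \<ge> w t"
  proof (rule DERIV_nonpos_imp_decreasing_open[OF t _ wc])
    fix s assume s: "0 < s" "s < t"
    have "at s within {0..} = at s" using s by (intro at_within_interior) auto
    then have d: "(w has_real_derivative (of_nat 2 * ((F (Y s) - F (Z s)) * (Y s - Z s) ^ (2 - Suc 0))) * exp (- (2 * K) * s)
      + exp (- (2 * K) * s) * (- (2 * K)) * (Y s - Z s)^2) (at s)" using wd[of s] s by simp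
    have "(F (Y s) - F (Z s)) * (Y s - Z s) \<le> \<bar>F (Y s) - F (Z s)\<bar> * \<bar>Y s - Z s\<bar>"
      by (metis abs_ge_self abs_mult)
    also have "\<dots> \<le> K * \<bar>Y s - Z s\<bar> * \<bar>Y s - Z s\<bar>"
      using K(2)[of "Y s" "Z s"] Y(2)[of s] Z(2)[of s] s by (intro mult_right_mono) auto
    also have "\<dots> = K * (Y s - Z s)^2" by (simp add: power2_eq_square abs_mult_self_eq)
    finally have "(F (Y s) - F (Z s)) * (Y s - Z s) \<le> K * (Y s - Z s)^2" .
    then have "(of_nat 2 * ((F (Y s) - F (Z s)) * (Y s - Z s) ^ (2 - Suc 0))) * exp (- (2 * K) * s)
      + exp (- (2 * K) * s) * (- (2 * K)) * (Y s - Z s)^2 \<le> 0"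
    proof -
      assume a: "(F (Y s) - F (Z s)) * (Y s - Z s) \<le> K * (Y s - Z s)^2"
      have "(of_nat 2 * ((F (Y s) - F (Z s)) * (Y s - Z s) ^ (2 - Suc 0))) * exp (- (2 * K) * s)
      + exp (- (2 * K) * s) * (- (2 * K)) * (Y s - Z s)^2
        = 2 * exp (- (2 * K) * s) * ((F (Y s) - F (Z s)) * (Y s - Z s) - K * (Y s - Z s)^2)"
        by (simp add: algebra_simps)
      also have "\<dots> \<le> 0" using a by (intro mult_nonneg_nonpos) auto
      finally show ?thesis .
    qed
    then show "\<exists>y. (w has_real_derivative y) (at s) \<and> y \<le> 0" using d by blast
  qed
  moreover have "w 0 = 0" using Y Z by (simp add: w_def)
  ultimately have "(Y t - Z t)^2 * exp (- (2 * K) * t) \<le> 0" by (simp add: w_def)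
  then have "(Y t - Z t)^2 \<le> 0" by (simp add: mult_le_0_iff)
  then show ?thesis by simp
qed

lemma Y01: assumes "Y 0 \<in> {0..1}" "\<forall>n. jko_step th V h (Y n) (Y (Suc n))" shows "Y n \<in> {0..1}"
  using assms by (cases n) (auto simp: jko_step_def)

lemma err:
  assumes x0: "x0 \<in> {0..1}" and X0: "X 0 = x0"
    and XD: "\<And>t. t \<ge> 0 \<Longrightarrow> X t \<in> {0..1}"
    and sD: "\<And>t. t \<ge> 0 \<Longrightarrow> ((\<lambda>t. S (X t)) has_real_derivative - G (X t)) (at t)"
    and MG: "MG \<ge> 0" "\<And>x. x\<in>{0..1} \<Longrightarrow> \<bar>G x\<bar> \<le> MG"
    and h: "h > 0" "h * Lg \<le> 1/2"
    and Y: "Y 0 = x0" "\<forall>n. jko_step th V h (Y n) (Y (Suc n))"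
  shows "\<bar>S (Y n) - S (X (real n * h))\<bar> \<le> real n * (Lg * MG) * h^2 * exp (2 * Lg * (real n * h))"
proof (induction n)
  case 0
  then show ?case using X0 Y by simp
next
  case (Suc n)
  define C where "C = Lg * MG"
  have C: "C \<ge> 0" using Lg MG by (simp add: C_def)
  define t0 where "t0 = real n * h"
  define t1 where "t1 = real (Suc n) * h"
  have t01: "t1 = t0 + h" "t0 \<ge> 0" "t1 \<ge> 0" using h by (auto simp: t0_def t1_def algebra_simps)
  have Yn: "\<And>m. Y m \<in> {0..1}" using Y01[of Y] Y x0 by auto
  have Xn: "\<And>t. t \<ge> 0 \<Longrightarrow> X t \<in> {0..1}" using XD by auto
  have slip: "\<bar>S (X s) - S (X t)\<bar> \<le> MG * \<bar>s - t\<bar>" if "s \<ge> 0" "t \<ge> 0" for s t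
    by (rule lip_from_der[where f'="\<lambda>t. - G (X t)"]) (use sD MG Xn that in auto)
  define rho where "rho \<tau> = S (X \<tau>) + \<tau> * G (X t1)" for \<tau>
  have "norm (rho t1 - rho t0) \<le> (C * h) * norm (t1 - t0)"
  proof (rule field_differentiable_bound[of "{t0..t1}" rho "\<lambda>\<tau>. - G (X \<tau>) + G (X t1)"])
    fix \<tau> assume \<tau>: "\<tau> \<in> {t0..t1}"
    then have "\<tau> \<ge> 0" using t01 by auto
    have "(rho has_real_derivative - G (X \<tau>) + 1 * G (X t1)) (at \<tau>)"
      unfolding rho_def[abs_def] by (intro DERIV_add sD \<open>\<tau> \<ge> 0\<close> DERIV_cmult_right DERIV_ident)
    then show "(rho has_real_derivative - G (X \<tau>) + G (X t1)) (at \<tau> within {t0..t1})"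
      by (simp add: has_field_derivative_at_within)
    have "\<bar>G (X t1) - G (X \<tau>)\<bar> \<le> Lg * \<bar>S (X t1) - S (X \<tau>)\<bar>"
      using Lg(2)[OF Xn[of t1] Xn[of \<tau>]] t01 \<open>\<tau> \<ge> 0\<close> h by auto
    also have "\<dots> \<le> Lg * (MG * \<bar>t1 - \<tau>\<bar>)"
      using slip[of t1 \<tau>] \<open>\<tau> \<ge> 0\<close> t01 Lg(1) h by (intro mult_left_mono) auto
    also have "\<dots> \<le> Lg * (MG * h)"
      using \<tau> t01 Lg(1) MG(1) by (intro mult_left_mono) auto
    finally show "norm (- G (X \<tau>) + G (X t1)) \<le> C * h" by (simp add: C_def mult.assoc)
  qed (use t01 h in auto)
  then have D: "\<bar>S (X t1) - S (X t0) + h * G (X t1)\<bar> \<le> C * h^2"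
    using t01 h by (simp add: rho_def power2_eq_square algebra_simps)
  have st: "S (Y (Suc n)) + h * G (Y (Suc n)) = S (Y n)"
    using step[of h "Y n" "Y (Suc n)"] h Yn Y by auto
  define e where "e m = S (Y m) - S (X (real m * h))" for m
  have e1: "e (Suc n) = e n - h * (G (Y (Suc n)) - G (X t1)) - (S (X t1) - S (X t0) + h * G (X t1))"
    using st unfolding e_def t0_def t1_def by (simp add: algebra_simps)
  have "\<bar>G (Y (Suc n)) - G (X t1)\<bar> \<le> Lg * \<bar>e (Suc n)\<bar>"
    using Lg(2)[OF Yn Xn[OF t01(3)]] by (simp add: e_def t1_def)
  then have "h * \<bar>G (Y (Suc n)) - G (X t1)\<bar> \<le> h * (Lg * \<bar>e (Suc n)\<bar>)"
    using h by (intro mult_left_mono) auto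
  moreover have "\<bar>e (Suc n)\<bar> \<le> \<bar>e n\<bar> + \<bar>h * (G (Y (Suc n)) - G (X t1))\<bar> + \<bar>S (X t1) - S (X t0) + h * G (X t1)\<bar>"
    unfolding e1 by (rule abs3)
  moreover have "\<bar>h * (G (Y (Suc n)) - G (X t1))\<bar> = h * \<bar>G (Y (Suc n)) - G (X t1)\<bar>"
    using h by (simp add: abs_mult)
  ultimately have "\<bar>e (Suc n)\<bar> \<le> \<bar>e n\<bar> + (h * Lg) * \<bar>e (Suc n)\<bar> + C * h^2"
    using D by (simp add: mult.assoc)
  then have "(1 - h * Lg) * \<bar>e (Suc n)\<bar> \<le> \<bar>e n\<bar> + C * h^2" by (simp add: algebra_simps)
  then have "\<bar>e (Suc n)\<bar> \<le> (\<bar>e n\<bar> + C * h^2) * (1 + 2 * (h * Lg))"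
    using h Lg(1) by (intro aux_ineq) auto
  also have "\<dots> \<le> (real n * C * h^2 * exp (2 * Lg * (real n * h)) + C * h^2) * exp (2 * (h * Lg))"
  proof (rule mult_mono)
    show "\<bar>e n\<bar> + C * h\<^sup>2 \<le> real n * C * h\<^sup>2 * exp (2 * Lg * (real n * h)) + C * h\<^sup>2"
      using Suc.IH by (simp add: e_def C_def)
    show "1 + 2 * (h * Lg) \<le> exp (2 * (h * Lg))" by (rule exp_ge_add_one_self)
  qed (use C h Lg(1) in auto)
  also have "\<dots> \<le> (real n * C * h^2 * exp (2 * Lg * (real n * h)) + C * h^2 * exp (2 * Lg * (real n * h))) * exp (2 * (h * Lg))"
  proof -
    have "1 \<le> exp (2 * Lg * (real n * h))" using Lg(1) h by simp
    then have "C * h^2 * 1 \<le> C * h^2 * exp (2 * Lg * (real n * h))" using C by (intro mult_left_mono) auto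
    then show ?thesis by (intro mult_right_mono) auto
  qed
  also have "\<dots> = real (Suc n) * C * h^2 * exp (2 * Lg * (real (Suc n) * h))"
  proof -
    have "exp (2 * Lg * (real n * h)) * exp (2 * (h * Lg)) = exp (2 * Lg * (real (Suc n) * h))"
      by (simp add: exp_add[symmetric] algebra_simps)
    then show ?thesis by (simp add: algebra_simps)
  qed
  finally show ?case by (simp add: e_def C_def)
qed

lemma sigma_der:
  assumes XD: "\<And>t. t \<ge> 0 \<Longrightarrow> X t \<in> {0..1} \<and> (X has_real_derivative F (X t)) (at t)"
    and Xc: "(\<forall>t\<ge>0. X t \<in> {0<..<1}) \<or> (F x0 = 0 \<and> (\<forall>t. X t = x0))" and x0: "x0 \<in> {0..1}"
    and t: "t \<ge> 0"
  shows "((\<lambda>t. S (X t)) has_real_derivative - G (X t)) (at t)"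
  using Xc
proof
  assume "\<forall>t\<ge>0. X t \<in> {0<..<1}"
  then have Xt: "X t \<in> {0<..<1}" using t by auto
  have "((\<lambda>t. S (X t)) has_real_derivative k (X t) * F (X t)) (at t)"
    by (rule DERIV_chain2[where f=S and g=X, OF S_der[OF Xt]]) (use XD t in auto)
  then show ?thesis using FG[OF Xt] by (simp add: mult.commute)
next
  assume c: "F x0 = 0 \<and> (\<forall>t. X t = x0)"
  then have "X = (\<lambda>t. x0)" by auto
  moreover have "G x0 = 0" using F0G0 c x0 by auto
  ultimately show ?thesis by simp
qed

lemma conv:
  assumes x0: "x0 \<in> {0..1}" and X0: "X 0 = x0"
    and XD: "\<And>t. t \<ge> 0 \<Longrightarrow> X t \<in> {0..1} \<and> (X has_real_derivative F (X t)) (at t)"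
    and sD: "\<And>t. t \<ge> 0 \<Longrightarrow> ((\<lambda>t. S (X t)) has_real_derivative - G (X t)) (at t)"
    and Xs: "\<forall>h>0. Xs h 0 = x0 \<and> (\<forall>n. jko_step th V h (Xs h n) (Xs h (Suc n)))"
    and T: "T > 0"
  shows "uniform_limit {0..T} (\<lambda>h t. pc_interp h (Xs h) t) X (at_right 0)"
  unfolding uniform_limit_iff
proof (intro allI impI)
  fix \<epsilon> :: real assume \<epsilon>: "\<epsilon> > 0"
  obtain MG where MG: "MG \<ge> 0" "\<And>x. x\<in>{0..1} \<Longrightarrow> \<bar>G x\<bar> \<le> MG" using G_bound by blast
  obtain MF where MF: "MF \<ge> 0" "\<And>x. x\<in>{0..1} \<Longrightarrow> \<bar>F x\<bar> \<le> MF" using F_bound by blast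
  obtain \<delta> where \<delta>: "\<delta> > 0" "\<And>x y. x\<in>{0..1} \<Longrightarrow> y\<in>{0..1} \<Longrightarrow> \<bar>S x - S y\<bar> < \<delta> \<Longrightarrow> \<bar>x - y\<bar> < \<epsilon>/2"
    using Sinv_uc[of "\<epsilon>/2"] \<epsilon> by auto
  define A where "A = (T + 1) * (Lg * MG) * exp (2 * Lg * (T + 1))"
  have A: "A \<ge> 0" using T Lg(1) MG by (simp add: A_def)
  define b where "b = min (min 1 (1 / (2 * Lg + 1))) (min (\<delta> / (A + 1)) (\<epsilon> / (2 * (MF + 1))))"
  have b: "b > 0" using Lg(1) \<delta> A \<epsilon> MF by (simp add: b_def)
  have main: "\<forall>t\<in>{0..T}. dist (pc_interp h (Xs h) t) (X t) < \<epsilon>" if h: "h \<in> {0<..<b}" for h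
  proof
    fix t assume t: "t \<in> {0..T}"
    have h0: "h > 0" "h < 1" using h by (auto simp: b_def)
    have "h * (2 * Lg + 1) < 1" using h Lg(1) by (auto simp: b_def field_simps)
    then have hL: "h * Lg \<le> 1/2" using h0 by (simp add: algebra_simps)
    have hd: "h * (A + 1) < \<delta>" using h A by (auto simp: b_def field_simps)
    have he: "h * (2 * (MF + 1)) < \<epsilon>" using h MF by (auto simp: b_def field_simps)
    define N where "N = nat \<lceil>t / h\<rceil>"
    have tpos: "t / h \<ge> 0" using t h0 by auto
    have rN: "real N = of_int \<lceil>t / h\<rceil>" using tpos by (simp add: N_def)
    have "t / h \<le> real N" "real N < t / h + 1" using rN by linarith+
    then have Nh: "t \<le> real N * h" "real N * h < t + h" using h0 by (auto simp: field_simps)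
    have NhT: "real N * h \<le> T + 1" using Nh t h0 by auto
    have Y: "Xs h 0 = x0" "\<forall>n. jko_step th V h (Xs h n) (Xs h (Suc n))" using Xs h0 by auto
    have YN: "Xs h N \<in> {0..1}" using Y01[of "Xs h"] Y x0 by auto
    have XN: "X (real N * h) \<in> {0..1}" "X t \<in> {0..1}" using XD Nh t by auto
    have "\<bar>S (Xs h N) - S (X (real N * h))\<bar> \<le> real N * (Lg * MG) * h^2 * exp (2 * Lg * (real N * h))"
      by (rule err[OF x0 X0 _ sD MG h0(1) hL Y]) (use XD in auto)
    also have "\<dots> = (real N * h) * (Lg * MG) * exp (2 * Lg * (real N * h)) * h"
      by (simp add: power2_eq_square)
    also have "\<dots> \<le> A * h"
      unfolding A_def
      using NhT Lg(1) MG(1) h0 T by (intro mult_right_mono mult_mono) (auto intro!: mult_nonneg_nonneg mult_left_mono)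
    also have "\<dots> < \<delta>" using hd A h0 by (simp add: algebra_simps)
    finally have d1: "\<bar>Xs h N - X (real N * h)\<bar> < \<epsilon>/2" using \<delta>(2)[OF YN XN(1)] by auto
    have "\<bar>X (real N * h) - X t\<bar> \<le> MF * \<bar>real N * h - t\<bar>"
      by (rule lip_from_der[where f'="\<lambda>t. F (X t)"]) (use XD MF Nh t in auto)
    also have "\<dots> \<le> MF * h" using Nh MF by (intro mult_left_mono) auto
    also have "\<dots> < \<epsilon>/2" using he h0 MF by (simp add: algebra_simps)
    finally have d2: "\<bar>X (real N * h) - X t\<bar> < \<epsilon>/2" .
    have "pc_interp h (Xs h) t = Xs h N" by (simp add: pc_interp_def N_def)
    moreover have "\<bar>Xs h N - X t\<bar> \<le> \<bar>Xs h N - X (real N * h)\<bar> + \<bar>X (real N * h) - X t\<bar>"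
      by (rule abs_tri)
    ultimately show "dist (pc_interp h (Xs h) t) (X t) < \<epsilon>" using d1 d2 by (simp add: dist_real_def)
  qed
  show "\<forall>\<^sub>F h in at_right 0. \<forall>t\<in>{0..T}. dist (pc_interp h (Xs h) t) (X t) < \<epsilon>"
    by (rule eventually_mono[OF eventually_at_right_real[OF b]]) (rule main)
qed

end

lemma der_unique01:
  assumes "x \<in> {0..1::real}" "(f has_real_derivative a) (at x within {0..1})"
    "(f has_real_derivative b) (at x within {0..1})"
  shows "a = b"
proof (rule has_field_derivative_unique[OF assms(2,3)])
  have "x islimpt {0..1::real}" using assms(1) by simp
  then show "at x within {0..1} \<noteq> bot" using trivial_limit_within by blast
qed

lemma smooth_D:
  assumes "smooth_on f {0..1}"
  obtains D where "D 0 = f" "\<And>n x. x \<in> {0..1} \<Longrightarrow> (D n has_real_derivative D (Suc n) x) (at x within {0..1})"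
  using assms unfolding smooth_on_def by blast

theorem theorem4:
  fixes \<theta> V V' :: "real \<Rightarrow> real" and XI :: real
  assumes "smooth_on \<theta> {0..1}"
    and "\<forall>x\<in>{0<..<1}. \<theta> x > 0"
    and "\<theta> 0 = 0" and "\<theta> 1 = 0"
    and "\<exists>a>0. (\<theta> has_real_derivative a) (at 0 within {0..1})"
    and "\<exists>b<0. (\<theta> has_real_derivative b) (at 1 within {0..1})"
    and "smooth_on V {0..1}"
    and "\<forall>x\<in>{0..1}. (V has_real_derivative V' x) (at x within {0..1})"
    and "XI \<in> {0..1}"
  shows "\<exists>X. replicator_sol \<theta> V' XI X
     \<and> (\<forall>Y. replicator_sol \<theta> V' XI Y \<longrightarrow> (\<forall>t\<ge>0. Y t = X t))
     \<and> (\<forall>Xs :: real \<Rightarrow> nat \<Rightarrow> real.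
          (\<forall>h>0. Xs h 0 = XI \<and> (\<forall>n. jko_step \<theta> V h (Xs h n) (Xs h (Suc n)))) \<longrightarrow>
          (\<forall>T>0. uniform_limit {0..T} (\<lambda>h t. pc_interp h (Xs h) t) X (at_right 0)))"
proof -
  obtain D where D: "D 0 = \<theta>" "\<And>n x. x \<in> {0..1} \<Longrightarrow> (D n has_real_derivative D (Suc n) x) (at x within {0..1})"
    using smooth_D[OF assms(1)] by blast
  obtain E where E: "E 0 = V" "\<And>n x. x \<in> {0..1} \<Longrightarrow> (E n has_real_derivative E (Suc n) x) (at x within {0..1})"
    using smooth_D[OF assms(7)] by blast
  have thd: "\<And>x. x \<in> {0..1} \<Longrightarrow> (\<theta> has_real_derivative D 1 x) (at x within {0..1})"
    using D(2)[where n=0] D(1) by simp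
  have Vd: "\<And>x. x \<in> {0..1} \<Longrightarrow> (V has_real_derivative E 1 x) (at x within {0..1})"
    using E(2)[where n=0] E(1) by simp
  have V'E: "V' x = E 1 x" if "x \<in> {0..1}" for x
    using der_unique01[OF that _ Vd[OF that]] assms(8) that by blast
  have D10: "D 1 0 > 0"
  proof -
    obtain a where a: "a > 0" "(\<theta> has_real_derivative a) (at 0 within {0..1})" using assms(5) by blast
    then show ?thesis using der_unique01[OF _ a(2) thd] by auto
  qed
  have D11: "D 1 1 < 0"
  proof -
    obtain b where b: "b < 0" "(\<theta> has_real_derivative b) (at 1 within {0..1})" using assms(6) by blast
    then show ?thesis using der_unique01[OF _ b(2) thd] by auto
  qed
  interpret J: jko \<theta> "D 1" "D 2" V "E 1" "E 2"
  proof
    show "\<And>x. x \<in> {0..1} \<Longrightarrow> (\<theta> has_real_derivative D 1 x) (at x within {0..1})" by (rule thd)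
    show "\<And>x. x \<in> {0..1} \<Longrightarrow> (D 1 has_real_derivative D 2 x) (at x within {0..1})"
      using D(2)[where n=1] by (simp add: numeral_2_eq_2)
    show "continuous_on {0..1} (D 2)"
      using D(2)[where n=2] by (intro cont_of_der) (auto simp: numeral_3_eq_3 numeral_2_eq_2)
    show "\<And>x. x \<in> {0..1} \<Longrightarrow> (V has_real_derivative E 1 x) (at x within {0..1})" by (rule Vd)
    show "\<And>x. x \<in> {0..1} \<Longrightarrow> (E 1 has_real_derivative E 2 x) (at x within {0..1})"
      using E(2)[where n=1] by (simp add: numeral_2_eq_2)
    show "continuous_on {0..1} (E 2)"
      using E(2)[where n=2] by (intro cont_of_der) (auto simp: numeral_3_eq_3 numeral_2_eq_2)
    show "\<And>x. x \<in> {0<..<1} \<Longrightarrow> 0 < \<theta> x" using assms(2) by blast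
  qed (use assms(3,4) D10 D11 in auto)
  obtain K where K: "K \<ge> 0" "\<And>x y. x\<in>{0..1} \<Longrightarrow> y\<in>{0..1} \<Longrightarrow> \<bar>J.F x - J.F y\<bar> \<le> K * \<bar>x - y\<bar>"
    using J.F_lip by blast
  have K1: "\<bar>J.F x - J.F y\<bar> \<le> (K + 1) * \<bar>x - y\<bar>" if "x\<in>{0..1}" "y\<in>{0..1}" for x y
  proof -
    have "K * \<bar>x - y\<bar> \<le> (K + 1) * \<bar>x - y\<bar>" by (intro mult_right_mono) auto
    then show ?thesis using K(2)[OF that] by linarith
  qed
  obtain X where X0: "X 0 = XI"
    and XD: "\<forall>t\<ge>0. X t \<in> {0..1} \<and> (X has_real_derivative J.F (X t)) (at t)"
    and Xc: "(\<forall>t\<ge>0. X t \<in> {0<..<1}) \<or> (J.F XI = 0 \<and> (\<forall>t. X t = XI))"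
  proof -
    have "K + 1 > 0" using K(1) by simp
    from ode_exists[OF J.F_c this K1 J.F_0 J.F_1 assms(9)] show ?thesis using that by blast
  qed
  have FV: "J.F x = - \<theta> x * V' x" if "x \<in> {0..1}" for x
    unfolding J.F_def using V'E[OF that] by simp
  have rep: "replicator_sol \<theta> V' XI X"
    unfolding replicator_sol_def
  proof (intro conjI allI impI)
    show "X 0 = XI" by (rule X0)
    fix t :: real assume t: "t \<ge> 0"
    show "X t \<in> {0..1}" using XD t by auto
    show "(X has_real_derivative - \<theta> (X t) * V' (X t)) (at t within {0..})"
    proof -
      have xt: "X t \<in> {0..1}" "(X has_real_derivative J.F (X t)) (at t)" using XD t by auto
      then have "(X has_real_derivative - \<theta> (X t) * V' (X t)) (at t)" using FV[OF xt(1)] by simp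
      then show ?thesis by (rule has_field_derivative_at_within)
    qed
  qed
  have un: "\<forall>t\<ge>0. Y t = X t" if Y: "replicator_sol \<theta> V' XI Y" for Y
  proof (intro allI impI)
    fix t :: real assume t: "t \<ge> 0"
    show "Y t = X t"
    proof (rule J.uniq[of Y XI X t])
      show "Y 0 = XI" using Y by (simp add: replicator_sol_def)
      show "Y s \<in> {0..1} \<and> (Y has_real_derivative J.F (Y s)) (at s within {0..})" if "s \<ge> 0" for s
      proof -
        have ys: "Y s \<in> {0..1}" "(Y has_real_derivative - \<theta> (Y s) * V' (Y s)) (at s within {0..})"
          using Y that unfolding replicator_sol_def by auto
        then show ?thesis using FV[OF ys(1)] by simp
      qed
      show "X 0 = XI" by (rule X0)
      show "X s \<in> {0..1} \<and> (X has_real_derivative J.F (X s)) (at s within {0..})" if "s \<ge> 0" for s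
      proof -
        have xs: "X s \<in> {0..1}" "(X has_real_derivative J.F (X s)) (at s)" using XD that by auto
        then show ?thesis using has_field_derivative_at_within by blast
      qed
    qed (rule t)
  qed
  have cv: "uniform_limit {0..T} (\<lambda>h t. pc_interp h (Xs h) t) X (at_right 0)"
    if Xs: "\<forall>h>0. Xs h 0 = XI \<and> (\<forall>n. jko_step \<theta> V h (Xs h n) (Xs h (Suc n)))" and T: "T > 0"
    for Xs :: "real \<Rightarrow> nat \<Rightarrow> real" and T :: real
  proof -
    have a: "\<And>t. t \<ge> 0 \<Longrightarrow> X t \<in> {0..1} \<and> (X has_real_derivative J.F (X t)) (at t)" using XD by auto
    have b: "\<And>t. t \<ge> 0 \<Longrightarrow> ((\<lambda>t. J.S (X t)) has_real_derivative - J.G (X t)) (at t)"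
      by (rule J.sigma_der[OF a Xc assms(9)])
    show ?thesis by (rule J.conv[OF assms(9) X0 a b Xs T])
  qed
  show ?thesis using rep un cv by blast
qed

end
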